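(* Let $G$ be a $k$-cop-win graph and let $H$ be a 1-point retract of $G$. Then for all $m\geq 1$, $H$ is $k$-cop-win and $\mathrm{capt}_k(H,m)\leq \mathrm{capt}_k(G,m)$.
   Context: All graphs are finite, simple, connected and reflexive (a player may stay in place). A homomorphism $f:G\to H$ maps vertices to vertices so that adjacent (or equal) vertices go to adjacent (or equal) vertices. An induced subgraph $H$ of $G$ is a retract if there is a homomorphism $f:G\to H$ with $f(x)=x$ for all $x\in V(H)$; if $H=G-u$ for some vertex $u$, $H$ is a 1-point retract. The game of $k$ cops and $m$ robbers on $G$: in round 0 the cops first choose starting vertices, then the robbers choose theirs. In each round $i\geq 1$, all $k$ cops move (each to an adjacent vertex or staying), then all $m$ robbers move likewise. Several players may occupy the same vertex. Whenever a cop and some robbers occupy the same vertex, those robbers are captured and take no further part in the game. Both sides have full information. The cops win if all robbers are captured after finitely many rounds. $G$ is $k$-cop-win if $k$ cops can always win against one robber. For a $k$-cop-win graph $G$, $\mathrm{capt}_k(G,m)$ is the index of the round in which the last robber is captured when $k$ cops play to minimize this index and $m$ robbers play to maximize it. *)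

theory Defs
  imports Main
begin

(* A finite, simple, connected, reflexive graph with vertex set V and
   symmetric edge relation E (loops at every vertex: a player may stay). *)
definition refl_graph :: "'a set \<Rightarrow> ('a \<Rightarrow> 'a \<Rightarrow> bool) \<Rightarrow> bool" where
  "refl_graph V E \<longleftrightarrow> finite V \<and> V \<noteq> {} \<and>
     (\<forall>x y. E x y \<longrightarrow> x \<in> V \<and> y \<in> V) \<and>
     (\<forall>x y. E x y \<longrightarrow> E y x) \<and>
     (\<forall>x\<in>V. E x x) \<and>
     (\<forall>x\<in>V. \<forall>y\<in>V. E\<^sup>*\<^sup>* x y)"

definition induced :: "('a \<Rightarrow> 'a \<Rightarrow> bool) \<Rightarrow> 'a set \<Rightarrow> 'a \<Rightarrow> 'a \<Rightarrow> bool" where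
  "induced E W = (\<lambda>x y. E x y \<and> x \<in> W \<and> y \<in> W)"

definition graph_hom :: "'a set \<Rightarrow> ('a \<Rightarrow> 'a \<Rightarrow> bool) \<Rightarrow> 'b set \<Rightarrow> ('b \<Rightarrow> 'b \<Rightarrow> bool) \<Rightarrow> ('a \<Rightarrow> 'b) \<Rightarrow> bool" where
  "graph_hom V E W F f \<longleftrightarrow> (\<forall>x\<in>V. f x \<in> W) \<and>
     (\<forall>x\<in>V. \<forall>y\<in>V. (x = y \<or> E x y) \<longrightarrow> (f x = f y \<or> F (f x) (f y)))"

definition is_retract :: "'a set \<Rightarrow> ('a \<Rightarrow> 'a \<Rightarrow> bool) \<Rightarrow> 'a set \<Rightarrow> bool" where
  "is_retract V E W \<longleftrightarrow> W \<subseteq> V \<and>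
     (\<exists>f. graph_hom V E W (induced E W) f \<and> (\<forall>x\<in>W. f x = x))"

definition one_point_retract :: "'a set \<Rightarrow> ('a \<Rightarrow> 'a \<Rightarrow> bool) \<Rightarrow> 'a set \<Rightarrow> bool" where
  "one_point_retract V E W \<longleftrightarrow> (\<exists>u\<in>V. W = V - {u} \<and> is_retract V E W)"

(* cops_win_in E n C R: the game is at the end of some round (after the robbers'
   move and captures), cops are at positions C (list, one entry per cop),
   the still-uncaptured robbers are at positions R (list, one entry per robber).
   Then the cops can force that all robbers are captured within n further rounds.
   In each round the cops move first (each along an edge or staying), robbers on
   a cop's vertex are captured, then all remaining robbers move, and robbers
   landing on a cop's vertex are captured. *)
fun cops_win_in :: "('a \<Rightarrow> 'a \<Rightarrow> bool) \<Rightarrow> nat \<Rightarrow> 'a list \<Rightarrow> 'a list \<Rightarrow> bool" where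
  "cops_win_in E 0 C R = (R = [])"
| "cops_win_in E (Suc n) C R =
     (R = [] \<or>
      (\<exists>C'. list_all2 E C C' \<and>
        (\<forall>R'. list_all2 E (filter (\<lambda>r. r \<notin> set C') R) R' \<longrightarrow>
               cops_win_in E n C' (filter (\<lambda>r. r \<notin> set C') R'))))"

(* k cops can capture all m robbers on G = (V,E) by round n (round 0 = placement:
   cops place first, then robbers; robbers placed on a cop are captured). *)
definition capture_by :: "'a set \<Rightarrow> ('a \<Rightarrow> 'a \<Rightarrow> bool) \<Rightarrow> nat \<Rightarrow> nat \<Rightarrow> nat \<Rightarrow> bool" where
  "capture_by V E k m n \<longleftrightarrow>
     (\<exists>C0. length C0 = k \<and> set C0 \<subseteq> V \<and>
        (\<forall>R0. length R0 = m \<and> set R0 \<subseteq> V \<longrightarrow>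
              cops_win_in E n C0 (filter (\<lambda>r. r \<notin> set C0) R0)))"

definition k_cop_win :: "'a set \<Rightarrow> ('a \<Rightarrow> 'a \<Rightarrow> bool) \<Rightarrow> nat \<Rightarrow> bool" where
  "k_cop_win V E k \<longleftrightarrow> (\<exists>n. capture_by V E k 1 n)"

definition capt :: "'a set \<Rightarrow> ('a \<Rightarrow> 'a \<Rightarrow> bool) \<Rightarrow> nat \<Rightarrow> nat \<Rightarrow> nat" where
  "capt V E k m = (LEAST n. capture_by V E k m n)"

end

theory Submission
  imports Defs
begin

inductive sub :: "'a list \<Rightarrow> 'a list \<Rightarrow> bool" where
  sub_nil: "sub [] []"
| sub_skip: "sub xs ys \<Longrightarrow> sub xs (y#ys)"
| sub_cons: "sub xs ys \<Longrightarrow> sub (x#xs) (x#ys)"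

lemma sub_refl: "sub xs xs"
  by (induction xs) (auto intro: sub.intros)

lemma sub_Nil2: "sub xs [] \<Longrightarrow> xs = []"
  by (cases rule: sub.cases) auto

lemma sub_filter:
  "sub xs ys \<Longrightarrow> (\<forall>x\<in>set ys. P x \<longrightarrow> Q x) \<Longrightarrow> sub (filter P xs) (filter Q ys)"
  by (induction rule: sub.induct) (auto intro: sub.intros)

fun reach :: "('a \<Rightarrow> 'a \<Rightarrow> bool) \<Rightarrow> ('a list \<times> 'a list) set \<Rightarrow> nat \<Rightarrow> 'a list \<Rightarrow> 'a list \<Rightarrow> bool" where
  "reach E S 0 C R = ((C,R) \<in> S)"
| "reach E S (Suc n) C R = ((C,R) \<in> S \<or>
     (\<exists>C'. list_all2 E C C' \<and>
        (\<forall>R'. list_all2 E (filter (\<lambda>r. r \<notin> set C') R) R' \<longrightarrow>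
               reach E S n C' (filter (\<lambda>r. r \<notin> set C') R'))))"

lemma reach_base: "(C,R) \<in> S \<Longrightarrow> reach E S n C R"
  by (cases n) auto

lemma reach_mono: "reach E S n C R \<Longrightarrow> n \<le> n' \<Longrightarrow> reach E S n' C R"
proof (induction n arbitrary: n' C R)
  case 0
  then show ?case by (auto intro: reach_base)
next
  case (Suc n)
  then obtain n'' where n': "n' = Suc n''" and le: "n \<le> n''" by (cases n') auto
  from Suc.prems(1) consider "(C,R) \<in> S" | C' where "list_all2 E C C'"
    "\<forall>R'. list_all2 E (filter (\<lambda>r. r \<notin> set C') R) R' \<longrightarrow> reach E S n C' (filter (\<lambda>r. r \<notin> set C') R')"
    by (simp only: reach.simps) blast
  then show ?case
  proof cases
    case 1 then show ?thesis by (rule reach_base)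
  next
    case 2
    have "\<forall>R'. list_all2 E (filter (\<lambda>r. r \<notin> set C') R) R' \<longrightarrow> reach E S n'' C' (filter (\<lambda>r. r \<notin> set C') R')"
      using 2(2) Suc.IH le by blast
    then show ?thesis unfolding n' using 2(1) by (simp only: reach.simps) blast
  qed
qed

lemma reach_comp:
  assumes "reach E S a C R" and "\<And>C' R'. (C',R') \<in> S \<Longrightarrow> reach E T b C' R'"
  shows "reach E T (a+b) C R"
  using assms(1)
proof (induction a arbitrary: C R)
  case 0
  then show ?case using assms(2) by auto
next
  case (Suc a)
  show ?case
  proof (cases "(C,R) \<in> S")
    case True
    then have "reach E T b C R" using assms(2) by blast
    then show ?thesis by (rule reach_mono) simp
  next
    case False
    with Suc.prems obtain C' where c: "list_all2 E C C'" and
      h: "\<forall>R'. list_all2 E (filter (\<lambda>r. r \<notin> set C') R) R' \<longrightarrow>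
               reach E S a C' (filter (\<lambda>r. r \<notin> set C') R')" by (simp only: reach.simps) blast
    have "\<forall>R'. list_all2 E (filter (\<lambda>r. r \<notin> set C') R) R' \<longrightarrow>
               reach E T (a+b) C' (filter (\<lambda>r. r \<notin> set C') R')" using h Suc.IH by blast
    then show ?thesis using c by (simp only: reach.simps add_Suc) blast
  qed
qed

lemma reach_cw: "reach E {(C,R). R = []} n C R = cops_win_in E n C R"
  by (induction n arbitrary: C R) auto

definition inv :: "'a set \<Rightarrow> 'a list \<Rightarrow> 'a list \<Rightarrow> 'a list \<Rightarrow> bool" where
  "inv V C0 C R \<longleftrightarrow> set C \<subseteq> V \<and> length C = length C0 \<and> set R \<subseteq> V \<and> (\<forall>r\<in>set R. r \<notin> set C)"

context
  fixes V :: "'a set" and E :: "'a \<Rightarrow> 'a \<Rightarrow> bool"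
  assumes G: "refl_graph V E"
begin

lemma EV: "E x y \<Longrightarrow> x \<in> V \<and> y \<in> V"
  using G unfolding refl_graph_def by blast

lemma Erefl: "x \<in> V \<Longrightarrow> E x x"
  using G unfolding refl_graph_def by blast

lemma all2_V: "list_all2 E xs ys \<Longrightarrow> set ys \<subseteq> V"
  by (induction rule: list_all2_induct) (auto dest: EV)

lemma all2_V1: "list_all2 E xs ys \<Longrightarrow> set xs \<subseteq> V"
  by (induction rule: list_all2_induct) (auto dest: EV)

lemma pad: "(E ^^ n) x y \<Longrightarrow> y \<in> V \<Longrightarrow> (E ^^ (n+j)) x y"
proof (induction j)
  case 0 then show ?case by simp
next
  case (Suc j)
  then have "(E ^^ (n+j)) x y" by simp
  then have "(E ^^ Suc (n+j)) x y" using Erefl[OF Suc.prems(2)] by (rule relpowp_Suc_I)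
  then show ?case by simp
qed

lemma diam: "\<exists>D. \<forall>x\<in>V. \<forall>y\<in>V. (E ^^ D) x y"
proof -
  have "\<forall>p\<in>V\<times>V. \<exists>n. (E ^^ n) (fst p) (snd p)"
  proof
    fix p assume p: "p \<in> V\<times>V"
    then have "fst p \<in> V" "snd p \<in> V" by auto
    then have "E\<^sup>*\<^sup>* (fst p) (snd p)" using G unfolding refl_graph_def by blast
    then show "\<exists>n. (E ^^ n) (fst p) (snd p)" by (rule rtranclp_imp_relpowp)
  qed
  from bchoice[OF this] obtain g where g: "\<forall>p\<in>V\<times>V. (E ^^ g p) (fst p) (snd p)" by blast
  have finV: "finite V" using G unfolding refl_graph_def by blast
  have fin: "finite (g ` (V\<times>V))" using finV by simp
  define D where "D = Max (g ` (V\<times>V))"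
  have "\<forall>x\<in>V. \<forall>y\<in>V. (E ^^ D) x y"
  proof (intro ballI)
    fix x y assume xy: "x \<in> V" "y \<in> V"
    then have mem: "(x,y) \<in> V\<times>V" by simp
    then have le: "g (x,y) \<le> D" unfolding D_def using fin by simp
    have g1: "(E ^^ g (x,y)) x y" using g mem by fastforce
    have "(E ^^ (g (x,y) + (D - g (x,y)))) x y" by (rule pad[OF g1 xy(2)])
    then show "(E ^^ D) x y" using le by simp
  qed
  then show ?thesis by blast
qed

lemma return:
  "list_all2 (E ^^ d) C C0 \<Longrightarrow> inv V C0 C R \<Longrightarrow> length R \<le> L \<Longrightarrow>
   reach E {(C',R'). C' = C0 \<and> inv V C0 C' R' \<and> length R' \<le> L} d C R"
proof (induction d arbitrary: C R)
  case 0
  then have "C = C0" by (simp add: list.rel_eq)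
  then show ?case using 0 by simp
next
  case (Suc d)
  have "list_all2 (E OO (E ^^ d)) C C0" using Suc.prems(1) by (metis relpowp_Suc_left)
  then obtain C1 where c1: "list_all2 E C C1" and c1': "list_all2 (E ^^ d) C1 C0"
    by (auto simp: list.rel_compp)
  have "\<forall>R'. list_all2 E (filter (\<lambda>r. r \<notin> set C1) R) R' \<longrightarrow>
               reach E {(C',R'). C' = C0 \<and> inv V C0 C' R' \<and> length R' \<le> L} d C1 (filter (\<lambda>r. r \<notin> set C1) R')"
  proof (intro allI impI)
    fix R' assume r': "list_all2 E (filter (\<lambda>r. r \<notin> set C1) R) R'"
    have "inv V C0 C1 (filter (\<lambda>r. r \<notin> set C1) R')"
      using all2_V[OF c1] all2_V[OF r'] list_all2_lengthD[OF c1] list_all2_lengthD[OF c1'] 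
      unfolding inv_def by auto
    moreover have "length (filter (\<lambda>r. r \<notin> set C1) R') \<le> L"
      using list_all2_lengthD[OF r'] Suc.prems(3) length_filter_le[of _ R'] length_filter_le[of _ R]
      by (metis le_trans)
    ultimately show "reach E {(C',R'). C' = C0 \<and> inv V C0 C' R' \<and> length R' \<le> L} d C1 (filter (\<lambda>r. r \<notin> set C1) R')"
      using Suc.IH[OF c1'] by blast
  qed
  then show ?case using c1 by auto
qed

lemma chase:
  "cops_win_in E j C [x] \<Longrightarrow> inv V C0 C (x#rest) \<Longrightarrow> length (x#rest) \<le> L \<Longrightarrow>
   reach E {(C',R'). inv V C0 C' R' \<and> length R' < L} j C (x#rest)"
proof (induction j arbitrary: C x rest)
  case 0
  then show ?case by simp
next
  case (Suc j)
  let ?S = "{(C',R'). inv V C0 C' R' \<and> length R' < L}"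
  from Suc.prems(1) obtain C' where c': "list_all2 E C C'" and
    h: "\<forall>R'. list_all2 E (filter (\<lambda>r. r \<notin> set C') [x]) R' \<longrightarrow> cops_win_in E j C' (filter (\<lambda>r. r \<notin> set C') R')"
    by auto
  have lenC': "length C' = length C0" using list_all2_lengthD[OF c'] Suc.prems(2) unfolding inv_def by simp
  have VC': "set C' \<subseteq> V" using all2_V[OF c'] .
  have "\<forall>R''. list_all2 E (filter (\<lambda>r. r \<notin> set C') (x#rest)) R'' \<longrightarrow>
               reach E ?S j C' (filter (\<lambda>r. r \<notin> set C') R'')"
  proof (intro allI impI)
    fix R'' assume r'': "list_all2 E (filter (\<lambda>r. r \<notin> set C') (x#rest)) R''"
    have invR: "inv V C0 C' (filter (\<lambda>r. r \<notin> set C') R'')"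
      using VC' lenC' all2_V[OF r''] unfolding inv_def by auto
    show "reach E ?S j C' (filter (\<lambda>r. r \<notin> set C') R'')"
    proof (cases "x \<in> set C'")
      case True
      then have "length R'' = length (filter (\<lambda>r. r \<notin> set C') rest)"
        using list_all2_lengthD[OF r''] by simp
      moreover have "length (filter (\<lambda>r. r \<notin> set C') R'') \<le> length R''" by (rule length_filter_le)
      moreover have "length (filter (\<lambda>r. r \<notin> set C') rest) \<le> length rest" by (rule length_filter_le)
      moreover have "Suc (length rest) \<le> L" using Suc.prems(3) by simp
      ultimately have "length (filter (\<lambda>r. r \<notin> set C') R'') < L"
        by linarith
      then show ?thesis using invR by (auto intro: reach_base)
    next
      case False
      then have "list_all2 E (x # filter (\<lambda>r. r \<notin> set C') rest) R''" using r'' by simp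
      then obtain x' rest'' where R'': "R'' = x' # rest''" and ex: "E x x'"
        and rr: "list_all2 E (filter (\<lambda>r. r \<notin> set C') rest) rest''"
        by (cases R'') auto
      have lr: "length rest'' \<le> length rest"
        using list_all2_lengthD[OF rr] length_filter_le[of "\<lambda>r. r \<notin> set C'" rest] by linarith
      show ?thesis
      proof (cases "x' \<in> set C'")
        case True
        then have "length (filter (\<lambda>r. r \<notin> set C') R'') < L"
          using R'' lr Suc.prems(3) length_filter_le[of "\<lambda>r. r \<notin> set C'" rest''] by (simp del: length_filter_le)
        then show ?thesis using invR by (auto intro: reach_base)
      next
        case False
        have "cops_win_in E j C' [x']" using h ex False \<open>x \<notin> set C'\<close> by auto
        moreover have "inv V C0 C' (x' # filter (\<lambda>r. r \<notin> set C') rest'')"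
          using invR R'' False by simp
        moreover have "length (x' # filter (\<lambda>r. r \<notin> set C') rest'') \<le> L"
          using lr Suc.prems(3) length_filter_le[of "\<lambda>r. r \<notin> set C'" rest''] by (simp del: length_filter_le)
        ultimately show ?thesis using Suc.IH R'' False by simp
      qed
    qed
  qed
  then show ?case using c' by auto
qed

lemma multi:
  assumes kw: "length C0 = k" "set C0 \<subseteq> V" "\<forall>r\<in>V. cops_win_in E N C0 (filter (\<lambda>r. r \<notin> set C0) [r])"
  shows "\<exists>n. capture_by V E k m n"
proof -
  obtain D where D: "\<forall>x\<in>V. \<forall>y\<in>V. (E ^^ D) x y" using diam by blast
  have step: "inv V C0 C R \<Longrightarrow> R \<noteq> [] \<Longrightarrow> length R \<le> Suc L \<Longrightarrow>
      reach E {(C',R'). inv V C0 C' R' \<and> length R' < Suc L} (D+N) C R" for C R L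
  proof -
    assume i: "inv V C0 C R" and "R \<noteq> []" and l: "length R \<le> Suc L"
    have "list_all2 (E ^^ D) C C0"
      unfolding list_all2_conv_all_nth
    proof (intro conjI allI impI)
      show "length C = length C0" using i unfolding inv_def by simp
      fix i' assume "i' < length C"
      moreover have "length C = length C0" using i unfolding inv_def by simp
      ultimately have "C ! i' \<in> set C" "C0 ! i' \<in> set C0" by (auto intro: nth_mem)
      then have "C ! i' \<in> V" "C0 ! i' \<in> V" using i kw(2) unfolding inv_def by auto
      then show "(E ^^ D) (C ! i') (C0 ! i')" using D by blast
    qed
    from return[OF this i l]
    have r1: "reach E {(C',R'). C' = C0 \<and> inv V C0 C' R' \<and> length R' \<le> Suc L} D C R" .
    show ?thesis
    proof (rule reach_comp[OF r1])
      fix C' R' assume "(C',R') \<in> {(C',R'). C' = C0 \<and> inv V C0 C' R' \<and> length R' \<le> Suc L}"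
      then have c: "C' = C0" and i': "inv V C0 C' R'" and l': "length R' \<le> Suc L" by auto
      show "reach E {(C',R'). inv V C0 C' R' \<and> length R' < Suc L} N C' R'"
      proof (cases R')
        case Nil
        then show ?thesis using i' by (auto intro: reach_base)
      next
        case (Cons x rest)
        then have "x \<in> V" "x \<notin> set C0" using i' c unfolding inv_def by auto
        then have "cops_win_in E N C0 [x]" using kw(3) by auto
        then show ?thesis using chase[of N C0 x C0 rest "Suc L"] i' l' c Cons by simp
      qed
    qed
  qed
  have fin: "inv V C0 C R \<Longrightarrow> length R \<le> L \<Longrightarrow> reach E {(C,R). R = []} (L*(D+N)) C R" for L C R
  proof (induction L arbitrary: C R)
    case 0 then show ?case by (auto intro: reach_base)
  next
    case (Suc L)
    show ?case
    proof (cases "R = []")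
      case True then show ?thesis by (auto intro: reach_base)
    next
      case False
      have "reach E {(C,R). R = []} ((D+N) + L*(D+N)) C R"
        by (rule reach_comp[OF step[OF Suc.prems(1) False Suc.prems(2)]]) (use Suc.IH in auto)
      then show ?thesis by (simp add: add.commute)
    qed
  qed
  have "capture_by V E k m (m*(D+N))"
    unfolding capture_by_def
  proof (intro exI[of _ C0] conjI allI impI)
    fix R0 :: "'a list" assume "length R0 = m \<and> set R0 \<subseteq> V"
    then have "inv V C0 C0 (filter (\<lambda>r. r \<notin> set C0) R0)" and
      "length (filter (\<lambda>r. r \<notin> set C0) R0) \<le> m"
      using kw unfolding inv_def by auto
    from fin[OF this] show "cops_win_in E (m*(D+N)) C0 (filter (\<lambda>r. r \<notin> set C0) R0)"
      by (simp add: reach_cw)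
  qed (use kw in auto)
  then show ?thesis by blast
qed

end


lemma lift_moves:
  assumes G: "refl_graph V E" and WV: "W \<subseteq> V"
  shows "sub A B \<Longrightarrow> list_all2 (induced E W) A A' \<Longrightarrow> set B \<subseteq> W \<Longrightarrow>
    \<exists>B'. list_all2 E B B' \<and> sub A' B' \<and> set B' \<subseteq> W"
proof (induction arbitrary: A' rule: sub.induct)
  case sub_nil
  then show ?case by (auto intro: sub.intros)
next
  case (sub_skip xs ys y)
  then obtain B' where "list_all2 E ys B'" "sub A' B'" "set B' \<subseteq> W"
    using sub_skip.IH[OF sub_skip.prems(1)] sub_skip.prems(2) by force
  moreover have "E y y" using sub_skip.prems(2) WV Erefl[OF G] by auto
  ultimately show ?case using sub_skip.prems(2) by (intro exI[of _ "y#B'"]) (auto intro: sub.intros)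
next
  case (sub_cons xs ys x)
  then obtain x' xs' where A': "A' = x' # xs'" and "induced E W x x'" and r: "list_all2 (induced E W) xs xs'"
    by (cases A') auto
  then have ex: "E x x'" "x' \<in> W" unfolding induced_def by auto
  from sub_cons.IH[OF r] sub_cons.prems(2) obtain B' where "list_all2 E ys B'" "sub xs' B'" "set B' \<subseteq> W" by auto
  then show ?case using ex A' by (intro exI[of _ "x'#B'"]) (auto intro: sub.intros)
qed

lemma retract_win:
  assumes G: "refl_graph V E" and WV: "W \<subseteq> V"
    and hom: "graph_hom V E W (induced E W) f" and fid: "\<forall>x\<in>W. f x = x"
  shows "cops_win_in E n C RG \<Longrightarrow> sub RH RG \<Longrightarrow> set RG \<subseteq> W \<Longrightarrow> cops_win_in (induced E W) n (map f C) RH"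
proof (induction n arbitrary: C RG RH)
  case 0
  then have "RG = []" by simp
  then have "RH = []" using 0 sub_Nil2 by blast
  then show ?case by simp
next
  case (Suc n)
  show ?case
  proof (cases "RG = []")
    case True
    then have "RH = []" using Suc.prems(2) sub_Nil2 by blast
    then show ?thesis by simp
  next
    case False
    with Suc.prems(1) obtain C' where c': "list_all2 E C C'" and
      h: "\<forall>R'. list_all2 E (filter (\<lambda>r. r \<notin> set C') RG) R' \<longrightarrow> cops_win_in E n C' (filter (\<lambda>r. r \<notin> set C') R')"
      by (simp only: cops_win_in.simps) blast
    have fc: "list_all2 (induced E W) (map f C) (map f C')"
      unfolding list_all2_map1 list_all2_map2
    proof (rule list_all2_mono[OF c'])
      fix c d assume e: "E c d"
      then have cd: "c \<in> V" "d \<in> V" using EV[OF G] by auto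
      then have "f c = f d \<or> induced E W (f c) (f d)" using hom e unfolding graph_hom_def by blast
      moreover have "f c \<in> W" using hom cd unfolding graph_hom_def by blast
      moreover have "f d \<in> W" using hom cd unfolding graph_hom_def by blast
      moreover have "E (f c) (f c)" using Erefl[OF G] WV \<open>f c \<in> W\<close> by blast
      ultimately show "induced E W (f c) (f d)"
        unfolding induced_def by metis
    qed
    have key: "\<And>xs. set xs \<subseteq> W \<Longrightarrow> \<forall>x\<in>set xs. x \<notin> set (map f C') \<longrightarrow> x \<notin> set C'"
    proof (intro ballI impI)
      fix xs x assume a: "set xs \<subseteq> W" "x \<in> set xs" "x \<notin> set (map f C')"
      show "x \<notin> set C'"
      proof
        assume "x \<in> set C'"
        then have "f x \<in> set (map f C')" by simp
        moreover have "f x = x" using fid a by blast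
        ultimately show False using a(3) by simp
      qed
    qed
    have "\<forall>R'. list_all2 (induced E W) (filter (\<lambda>r. r \<notin> set (map f C')) RH) R' \<longrightarrow>
             cops_win_in (induced E W) n (map f C') (filter (\<lambda>r. r \<notin> set (map f C')) R')"
    proof (intro allI impI)
      fix R' assume r': "list_all2 (induced E W) (filter (\<lambda>r. r \<notin> set (map f C')) RH) R'"
      have s: "sub (filter (\<lambda>r. r \<notin> set (map f C')) RH) (filter (\<lambda>r. r \<notin> set C') RG)"
        by (rule sub_filter[OF Suc.prems(2) key[OF Suc.prems(3)]])
      have "set (filter (\<lambda>r. r \<notin> set C') RG) \<subseteq> W" using Suc.prems(3) by auto
      from lift_moves[OF G WV s r' this] obtain B' where
        b: "list_all2 E (filter (\<lambda>r. r \<notin> set C') RG) B'" "sub R' B'" "set B' \<subseteq> W" by blast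
      have "cops_win_in E n C' (filter (\<lambda>r. r \<notin> set C') B')" using h b(1) by simp
      moreover have "sub (filter (\<lambda>r. r \<notin> set (map f C')) R') (filter (\<lambda>r. r \<notin> set C') B')"
        by (rule sub_filter[OF b(2) key[OF b(3)]])
      moreover have "set (filter (\<lambda>r. r \<notin> set C') B') \<subseteq> W" using b(3) by auto
      ultimately show "cops_win_in (induced E W) n (map f C') (filter (\<lambda>r. r \<notin> set (map f C')) R')"
        by (rule Suc.IH)
    qed
    then show ?thesis using fc by (simp only: cops_win_in.simps) blast
  qed
qed

lemma retract_capture:
  assumes G: "refl_graph V E" and WV: "W \<subseteq> V"
    and hom: "graph_hom V E W (induced E W) f" and fid: "\<forall>x\<in>W. f x = x"
    and cb: "capture_by V E k m n"
  shows "capture_by W (induced E W) k m n"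
proof -
  from cb obtain C0 where c0: "length C0 = k" "set C0 \<subseteq> V" and
    w: "\<forall>R0. length R0 = m \<and> set R0 \<subseteq> V \<longrightarrow> cops_win_in E n C0 (filter (\<lambda>r. r \<notin> set C0) R0)"
    unfolding capture_by_def by blast
  show ?thesis unfolding capture_by_def
  proof (intro exI[of _ "map f C0"] conjI allI impI)
    show "length (map f C0) = k" using c0 by simp
    have fW: "\<forall>x\<in>V. f x \<in> W" using hom unfolding graph_hom_def by blast
    show "set (map f C0) \<subseteq> W" using c0(2) fW by fastforce
    fix R0 assume r0: "length R0 = m \<and> set R0 \<subseteq> W"
    then have "length R0 = m \<and> set R0 \<subseteq> V" using WV by blast
    then have "cops_win_in E n C0 (filter (\<lambda>r. r \<notin> set C0) R0)" using w by blast
    moreover have "\<forall>x\<in>set R0. x \<notin> set (map f C0) \<longrightarrow> x \<notin> set C0"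
    proof (intro ballI impI)
      fix x assume x: "x \<in> set R0" "x \<notin> set (map f C0)"
      show "x \<notin> set C0"
      proof
        assume "x \<in> set C0"
        then have "f x \<in> set (map f C0)" by simp
        moreover have "f x = x" using fid x(1) r0 by blast
        ultimately show False using x(2) by simp
      qed
    qed
    then have "sub (filter (\<lambda>r. r \<notin> set (map f C0)) R0) (filter (\<lambda>r. r \<notin> set C0) R0)"
      by (rule sub_filter[OF sub_refl])
    moreover have "set (filter (\<lambda>r. r \<notin> set C0) R0) \<subseteq> W" using r0 by auto
    ultimately show "cops_win_in (induced E W) n (map f C0) (filter (\<lambda>r. r \<notin> set (map f C0)) R0)"
      using retract_win[OF G WV hom fid] by blast
  qed
qed

theorem mainTheorem12:
  fixes V :: "'a set" and E :: "'a \<Rightarrow> 'a \<Rightarrow> bool" and W :: "'a set" and k :: nat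
  assumes "refl_graph V E"
    and "k_cop_win V E k"
    and "one_point_retract V E W"
  shows "k_cop_win W (induced E W) k \<and>
         (\<forall>m\<ge>1. capt W (induced E W) k m \<le> capt V E k m)"
proof -
  note G = assms(1)
  from assms(3) have "is_retract V E W" unfolding one_point_retract_def by blast
  then have WV: "W \<subseteq> V" and "\<exists>f. graph_hom V E W (induced E W) f \<and> (\<forall>x\<in>W. f x = x)"
    unfolding is_retract_def by blast+
  then obtain f where hom: "graph_hom V E W (induced E W) f"
    and fid: "\<forall>x\<in>W. f x = x" by blast
  from assms(2) obtain N where N: "capture_by V E k 1 N" unfolding k_cop_win_def by blast
  have kw: "k_cop_win W (induced E W) k"
    using retract_capture[OF G WV hom fid N] unfolding k_cop_win_def by blast
  from N obtain C0 where c0: "length C0 = k" "set C0 \<subseteq> V" and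
    w: "\<forall>R0. length R0 = 1 \<and> set R0 \<subseteq> V \<longrightarrow> cops_win_in E N C0 (filter (\<lambda>r. r \<notin> set C0) R0)"
    unfolding capture_by_def by blast
  have w1: "\<forall>r\<in>V. cops_win_in E N C0 (filter (\<lambda>r. r \<notin> set C0) [r])"
  proof
    fix r assume "r \<in> V"
    then have "length [r] = 1 \<and> set [r] \<subseteq> V" by simp
    then show "cops_win_in E N C0 (filter (\<lambda>r. r \<notin> set C0) [r])" using w by blast
  qed
  have "capt W (induced E W) k m \<le> capt V E k m" for m
  proof -
    obtain n where "capture_by V E k m n" using multi[OF G c0 w1] by blast
    then have "capture_by V E k m (capt V E k m)" unfolding capt_def by (rule LeastI)
    then have "capture_by W (induced E W) k m (capt V E k m)"
      by (rule retract_capture[OF G WV hom fid])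
    then show ?thesis unfolding capt_def by (rule Least_le)
  qed
  then show ?thesis using kw by blast
qed

end
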